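(* Let $p$ be a prime and $n\ge1$. Suppose $V_m\to V$ in $\mathcal{Z}$. Then there is $m_0$ such that $V\subset V_m$ for all $m\ge m_0$.
   Context: $\mathcal{L}_{n,p}=\left(\bigoplus_{\mathbb{Z}}(\mathbb{Z}/p\mathbb{Z})^n\right)\rtimes\mathbb{Z}$ and $\mathcal{A}_{n,p}=\bigoplus_{\mathbb{Z}}(\mathbb{Z}/p\mathbb{Z})^n$. ${\rm Sub}(G)$ is the space of subgroups of $G$ with the topology induced from $\{0,1\}^G$, and $\mathcal{Z}={\rm Sub}(\mathcal{L}_{n,p})\setminus{\rm Sub}(\mathcal{A}_{n,p})$, the subgroups of $\mathcal{L}_{n,p}$ not contained in $\mathcal{A}_{n,p}$. *)

theory Defs
  imports "HOL-Algebra.Group" "HOL-Computational_Algebra.Primes"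
begin

text \<open>Elements of L_{n,p}: pairs (f,k) where f : int \<Rightarrow> (Z/pZ)^n is finitely supported
(an element of the direct sum over Z of copies of (Z/pZ)^n, with (Z/pZ)^n encoded as
functions nat \<Rightarrow> int with values in {0..<p} on coordinates < n and 0 elsewhere)
and k : int.  Z acts on the direct sum by shifting the index.\<close>

type_synonym lelem = "(int \<Rightarrow> nat \<Rightarrow> int) \<times> int"

definition lamp_carrier :: "nat \<Rightarrow> nat \<Rightarrow> lelem set" where
  "lamp_carrier n p = {(f, k). (\<forall>z i. 0 \<le> f z i \<and> f z i < int p)
      \<and> (\<forall>z i. n \<le> i \<longrightarrow> f z i = 0)
      \<and> finite {z. f z \<noteq> (\<lambda>_. 0)}}"

definition lamp_mult :: "nat \<Rightarrow> lelem \<Rightarrow> lelem \<Rightarrow> lelem" where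
  "lamp_mult p x y = ((\<lambda>z i. (fst x z i + fst y (z - snd x) i) mod int p), snd x + snd y)"

definition L :: "nat \<Rightarrow> nat \<Rightarrow> lelem monoid" where
  "L n p = \<lparr>carrier = lamp_carrier n p, monoid.mult = lamp_mult p, monoid.one = (\<lambda>z i. 0, 0)\<rparr>"

definition A :: "nat \<Rightarrow> nat \<Rightarrow> lelem set" where
  "A n p = {x \<in> lamp_carrier n p. snd x = 0}"

definition Sub :: "('a, 'b) monoid_scheme \<Rightarrow> 'a set set" where
  "Sub G = {H. subgroup H G}"

definition Zset :: "nat \<Rightarrow> nat \<Rightarrow> lelem set set" where
  "Zset n p = Sub (L n p) - Pow (A n p)"

text \<open>Convergence in Sub(G) with the topology induced from {0,1}^G (product topology):
pointwise eventual agreement of indicator functions.\<close>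
definition sub_converges :: "('a, 'b) monoid_scheme \<Rightarrow> (nat \<Rightarrow> 'a set) \<Rightarrow> 'a set \<Rightarrow> bool" where
  "sub_converges G Vs V \<longleftrightarrow>
     (\<forall>g \<in> carrier G. eventually (\<lambda>m. (g \<in> Vs m) = (g \<in> V)) sequentially)"

end

theory Submission
  imports Defs
begin

lemma L_simps [simp]:
  "carrier (L n p) = lamp_carrier n p"
  "x \<otimes>\<^bsub>L n p\<^esub> y = lamp_mult p x y"
  "\<one>\<^bsub>L n p\<^esub> = (\<lambda>z i. 0, 0)"
  by (simp_all add: L_def)

lemma carrierD:
  assumes "(f, k) \<in> lamp_carrier n p"
  shows "\<And>z i. 0 \<le> f z i" "\<And>z i. f z i < int p" "\<And>z i. n \<le> i \<Longrightarrow> f z i = 0"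
    "finite {z. f z \<noteq> (\<lambda>_. 0)}"
  using assms by (auto simp: lamp_carrier_def)

lemma mod_id: "p > 0 \<Longrightarrow> (f,k) \<in> lamp_carrier n p \<Longrightarrow> f z i mod int p = f z i"
  using carrierD[of f k n p] by (simp add: mod_pos_pos_trivial)

lemma mult_closed:
  assumes p: "p > 0" and x: "x \<in> lamp_carrier n p" and y: "y \<in> lamp_carrier n p"
  shows "lamp_mult p x y \<in> lamp_carrier n p"
proof -
  obtain f k where fx: "x = (f, k)" by fastforce
  obtain g l where gy: "y = (g, l)" by fastforce
  note cf = carrierD[OF x[unfolded fx]] and cg = carrierD[OF y[unfolded gy]]
  have "{z. (\<lambda>i. (f z i + g (z - k) i) mod int p) \<noteq> (\<lambda>_. 0)}
      \<subseteq> {z. f z \<noteq> (\<lambda>_. 0)} \<union> (\<lambda>z. z + k) ` {z. g z \<noteq> (\<lambda>_. 0)}"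
  proof
    fix z assume "z \<in> {z. (\<lambda>i. (f z i + g (z - k) i) mod int p) \<noteq> (\<lambda>_. 0)}"
    then have "f z \<noteq> (\<lambda>_. 0) \<or> g (z - k) \<noteq> (\<lambda>_. 0)" by auto
    then show "z \<in> {z. f z \<noteq> (\<lambda>_. 0)} \<union> (\<lambda>z. z + k) ` {z. g z \<noteq> (\<lambda>_. 0)}"
      by (auto intro: image_eqI[where x="z - k"])
  qed
  moreover have "finite ({z. f z \<noteq> (\<lambda>_. 0)} \<union> (\<lambda>z. z + k) ` {z. g z \<noteq> (\<lambda>_. 0)})"
    using cf(4) cg(4) by auto
  ultimately have fin: "finite {z. (\<lambda>i. (f z i + g (z - k) i) mod int p) \<noteq> (\<lambda>_. 0)}"
    by (rule finite_subset)
  show ?thesis using fin p cf(3) cg(3)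
    by (auto simp: fx gy lamp_mult_def lamp_carrier_def)
qed

lemma inv_elem_carrier:
  assumes p: "p > 0" and x: "(f, k) \<in> lamp_carrier n p"
  shows "((\<lambda>z i. (- f (z + k) i) mod int p), - k) \<in> lamp_carrier n p"
proof -
  note cf = carrierD[OF x]
  have "{z. (\<lambda>i. (- f (z + k) i) mod int p) \<noteq> (\<lambda>_. 0)} \<subseteq> (\<lambda>z. z - k) ` {z. f z \<noteq> (\<lambda>_. 0)}"
  proof
    fix z assume "z \<in> {z. (\<lambda>i. (- f (z + k) i) mod int p) \<noteq> (\<lambda>_. 0)}"
    then have "f (z + k) \<noteq> (\<lambda>_. 0)" by auto
    then show "z \<in> (\<lambda>z. z - k) ` {z. f z \<noteq> (\<lambda>_. 0)}"
      by (auto intro: image_eqI[where x="z + k"])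
  qed
  then have fin: "finite {z. (\<lambda>i. (- f (z + k) i) mod int p) \<noteq> (\<lambda>_. 0)}"
    using cf(4) finite_subset by blast
  show ?thesis using fin p cf(3) by (auto simp: lamp_carrier_def)
qed

lemma L_group: assumes p: "p > 0" shows "group (L n p)"
proof (rule groupI)
  fix x y assume "x \<in> carrier (L n p)" "y \<in> carrier (L n p)"
  then show "x \<otimes>\<^bsub>L n p\<^esub> y \<in> carrier (L n p)" using mult_closed[OF p] by simp
next
  show "\<one>\<^bsub>L n p\<^esub> \<in> carrier (L n p)" using p by (simp add: lamp_carrier_def)
next
  fix x y z assume "x \<in> carrier (L n p)" "y \<in> carrier (L n p)" "z \<in> carrier (L n p)"
  show "x \<otimes>\<^bsub>L n p\<^esub> y \<otimes>\<^bsub>L n p\<^esub> z = x \<otimes>\<^bsub>L n p\<^esub> (y \<otimes>\<^bsub>L n p\<^esub> z)"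
    by (auto simp: lamp_mult_def mod_add_left_eq mod_add_right_eq add.assoc diff_diff_eq add.commute[of "snd y" "snd x"])
next
  fix x assume "x \<in> carrier (L n p)"
  then obtain f k where x: "x = (f, k)" "(f,k) \<in> lamp_carrier n p" by (cases x) auto
  show "\<one>\<^bsub>L n p\<^esub> \<otimes>\<^bsub>L n p\<^esub> x = x"
    using mod_id[OF p x(2)] by (simp add: x lamp_mult_def)
next
  fix x assume "x \<in> carrier (L n p)"
  then obtain f k where x: "x = (f, k)" "(f,k) \<in> lamp_carrier n p" by (cases x) auto
  show "\<exists>y\<in>carrier (L n p). y \<otimes>\<^bsub>L n p\<^esub> x = \<one>\<^bsub>L n p\<^esub>"
  proof (intro bexI)
    show "((\<lambda>z i. (- f (z + k) i) mod int p), - k) \<in> carrier (L n p)"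
      using inv_elem_carrier[OF p x(2)] by simp
    show "((\<lambda>z i. (- f (z + k) i) mod int p), - k) \<otimes>\<^bsub>L n p\<^esub> x = \<one>\<^bsub>L n p\<^esub>"
      by (auto simp: x lamp_mult_def mod_add_left_eq)
  qed
qed

lemma L_inv:
  assumes p: "p > 0" and x: "(f, k) \<in> lamp_carrier n p"
  shows "inv\<^bsub>L n p\<^esub> (f, k) = ((\<lambda>z i. (- f (z + k) i) mod int p), - k)"
  apply (rule group.inv_equality[OF L_group[OF p]])
  using inv_elem_carrier[OF p x] x by (auto simp: lamp_mult_def mod_add_left_eq)

definition insupp :: "lelem \<Rightarrow> int \<Rightarrow> int \<Rightarrow> bool" where
  "insupp w lo hi \<longleftrightarrow> (\<forall>z i. fst w z i \<noteq> 0 \<longrightarrow> lo \<le> z \<and> z < hi)"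

definition shiftA :: "int \<Rightarrow> lelem \<Rightarrow> lelem" where
  "shiftA c a = ((\<lambda>z i. fst a (z - c) i), 0)"

lemma finite_funs:
  assumes "finite Z0"
  shows "finite {f :: int \<Rightarrow> nat \<Rightarrow> int. (\<forall>z i. 0 \<le> f z i \<and> f z i < int p)
     \<and> (\<forall>z i. z \<notin> Z0 \<or> n \<le> i \<longrightarrow> f z i = 0)}" (is "finite ?S")
proof -
  let ?D = "Z0 \<times> {..<n}"
  define F :: "(int \<times> nat \<Rightarrow> int) \<Rightarrow> int \<Rightarrow> nat \<Rightarrow> int" where
    "F = (\<lambda>g z i. if (z,i) \<in> ?D then g (z,i) else 0)"
  have "?S \<subseteq> F ` (PiE ?D (\<lambda>_. {0..<int p}))"
  proof
    fix f assume f: "f \<in> ?S"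
    let ?g = "\<lambda>x. if x \<in> ?D then f (fst x) (snd x) else undefined"
    have 1: "?g \<in> PiE ?D (\<lambda>_. {0..<int p})" using f unfolding PiE_def extensional_def by auto
    have 2: "f = F ?g"
      using f unfolding F_def by (auto intro!: ext)
    show "f \<in> F ` (PiE ?D (\<lambda>_. {0..<int p}))"
      using 1 2 by blast
  qed
  moreover have "finite (PiE ?D (\<lambda>_. {0..<int p}))"
    using assms by (intro finite_PiE) auto
  ultimately show ?thesis using finite_subset finite_imageI by blast
qed

lemma finite_window:
  "finite {w \<in> A n p. insupp w lo hi}"
proof -
  let ?S = "{f :: int \<Rightarrow> nat \<Rightarrow> int. (\<forall>z i. 0 \<le> f z i \<and> f z i < int p)
     \<and> (\<forall>z i. z \<notin> {lo..<hi} \<or> n \<le> i \<longrightarrow> f z i = 0)}"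
  have "{w \<in> A n p. insupp w lo hi} \<subseteq> (\<lambda>f. (f, 0)) ` ?S"
  proof
    fix w assume w: "w \<in> {w \<in> A n p. insupp w lo hi}"
    define f where "f = fst w"
    have wA: "w \<in> A n p" and s: "insupp w lo hi" using w by simp_all
    have wf: "w = (f, 0)" using wA unfolding A_def f_def by (cases w) simp
    have c: "(f,0) \<in> lamp_carrier n p" using wA wf unfolding A_def by simp
    have "\<forall>z i. z \<notin> {lo..<hi} \<or> n \<le> i \<longrightarrow> f z i = 0"
    proof (intro allI impI)
      fix z i assume "z \<notin> {lo..<hi} \<or> n \<le> i"
      then show "f z i = 0"
      proof
        assume "n \<le> i" then show ?thesis using carrierD(3)[OF c] by simp
      next
        assume z: "z \<notin> {lo..<hi}"
        show ?thesis
        proof (rule ccontr)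
          assume "f z i \<noteq> 0"
          then have "lo \<le> z \<and> z < hi" using s unfolding insupp_def f_def by blast
          then show False using z by simp
        qed
      qed
    qed
    then have fS: "f \<in> ?S" using carrierD(1,2)[OF c] by simp
    show "w \<in> (\<lambda>f. (f, 0)) ` ?S" by (rule image_eqI[where x=f, OF _ fS]) (rule wf)
  qed
  then show ?thesis by (rule finite_subset[OF _ finite_imageI[OF finite_funs]]) simp
qed

lemma A_mult:
  assumes "a \<in> A n p" "b \<in> A n p"
  shows "a \<otimes>\<^bsub>L n p\<^esub> b = ((\<lambda>z i. (fst a z i + fst b z i) mod int p), 0)"
  using assms by (simp add: A_def lamp_mult_def)

lemma A_inv:
  assumes p: "p > 0" and "a \<in> A n p"
  shows "inv\<^bsub>L n p\<^esub> a = ((\<lambda>z i. (- fst a z i) mod int p), 0)"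
proof -
  obtain f where af: "a = (f, 0)" "(f,0) \<in> lamp_carrier n p" using assms(2) by (cases a) (auto simp: A_def)
  show ?thesis using L_inv[OF p af(2)] af by simp
qed

lemma shift_A:
  assumes "a \<in> A n p" shows "shiftA c a \<in> A n p"
proof -
  obtain f where af: "a = (f, 0)" "(f,0) \<in> lamp_carrier n p" using assms by (cases a) (auto simp: A_def)
  note cf = carrierD[OF af(2)]
  have "{z. (\<lambda>i. f (z - c) i) \<noteq> (\<lambda>_. 0)} \<subseteq> (\<lambda>z. z + c) ` {z. f z \<noteq> (\<lambda>_. 0)}"
  proof
    fix z assume "z \<in> {z. (\<lambda>i. f (z - c) i) \<noteq> (\<lambda>_. 0)}"
    then show "z \<in> (\<lambda>z. z + c) ` {z. f z \<noteq> (\<lambda>_. 0)}"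
      by (auto intro: image_eqI[where x="z - c"])
  qed
  then have "finite {z. (\<lambda>i. f (z - c) i) \<noteq> (\<lambda>_. 0)}"
    using cf(4) finite_subset by blast
  then show ?thesis using cf af by (auto simp: A_def lamp_carrier_def shiftA_def)
qed

lemma conj_shift:
  assumes p: "p > 0" and t: "(f, k) \<in> lamp_carrier n p" and a: "a \<in> A n p"
  shows "(f, k) \<otimes>\<^bsub>L n p\<^esub> a \<otimes>\<^bsub>L n p\<^esub> inv\<^bsub>L n p\<^esub> (f, k) = shiftA k a"
    and "inv\<^bsub>L n p\<^esub> (f, k) \<otimes>\<^bsub>L n p\<^esub> a \<otimes>\<^bsub>L n p\<^esub> (f, k) = shiftA (- k) a"
proof -
  obtain g where ag: "a = (g, 0)" "(g,0) \<in> lamp_carrier n p" using a by (cases a) (auto simp: A_def)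
  have gm: "\<And>z i. g z i mod int p = g z i" using mod_id[OF p ag(2)] .
  show "(f, k) \<otimes>\<^bsub>L n p\<^esub> a \<otimes>\<^bsub>L n p\<^esub> inv\<^bsub>L n p\<^esub> (f, k) = shiftA k a"
    unfolding L_inv[OF p t] using gm
    by (auto simp: ag shiftA_def lamp_mult_def mod_add_left_eq mod_add_right_eq mod_diff_left_eq mod_diff_right_eq)
  show "inv\<^bsub>L n p\<^esub> (f, k) \<otimes>\<^bsub>L n p\<^esub> a \<otimes>\<^bsub>L n p\<^esub> (f, k) = shiftA (- k) a"
    unfolding L_inv[OF p t] using gm
    by (auto simp: ag shiftA_def lamp_mult_def mod_add_left_eq mod_add_right_eq mod_diff_left_eq mod_diff_right_eq)
qed

lemma snd_mult [simp]: "snd (lamp_mult p x y) = snd x + snd y"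
  by (simp add: lamp_mult_def)

lemma snd_inv:
  assumes p: "p > 0" and x: "x \<in> lamp_carrier n p"
  shows "snd (inv\<^bsub>L n p\<^esub> x) = - snd x"
proof -
  have x': "(fst x, snd x) \<in> lamp_carrier n p" using x by simp
  show ?thesis using L_inv[OF p x'] by simp
qed

lemma shiftA_shiftA: "shiftA c (shiftA d a) = shiftA (c + d) a"
  by (simp add: shiftA_def diff_diff_eq add.commute)

lemma shiftA_0: "a \<in> A n p \<Longrightarrow> shiftA 0 a = a"
  by (cases a) (simp add: shiftA_def A_def)

lemma shift_step:
  assumes p: "p > 0" and K: "subgroup K (L n p)" and t: "t \<in> K"
    and b: "b \<in> K" "b \<in> A n p"
  shows "shiftA (snd t) b \<in> K" "shiftA (- snd t) b \<in> K"
proof -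
  have tc: "(fst t, snd t) \<in> lamp_carrier n p" using subgroup.subset[OF K] t by auto
  have t': "(fst t, snd t) \<in> K" using t by simp
  have 1: "(fst t, snd t) \<otimes>\<^bsub>L n p\<^esub> b \<otimes>\<^bsub>L n p\<^esub> inv\<^bsub>L n p\<^esub> (fst t, snd t) \<in> K"
    using K t' b by (intro subgroup.m_closed subgroup.m_inv_closed) auto
  have 2: "inv\<^bsub>L n p\<^esub> (fst t, snd t) \<otimes>\<^bsub>L n p\<^esub> b \<otimes>\<^bsub>L n p\<^esub> (fst t, snd t) \<in> K"
    using K t' b by (intro subgroup.m_closed subgroup.m_inv_closed) auto
  show "shiftA (snd t) b \<in> K" using 1 conj_shift(1)[OF p tc b(2)] by simp
  show "shiftA (- snd t) b \<in> K" using 2 conj_shift(2)[OF p tc b(2)] by simp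
qed

lemma shift_closed:
  assumes p: "p > 0" and K: "subgroup K (L n p)" and t: "t \<in> K"
  shows "\<forall>a. a \<in> K \<and> a \<in> A n p \<longrightarrow> shiftA (q * snd t) a \<in> K"
proof (induct q rule: int_induct[where k=0])
  case base
  then show ?case by (auto simp: shiftA_0)
next
  case (step1 i)
  show ?case
  proof (intro allI impI)
    fix a assume a: "a \<in> K \<and> a \<in> A n p"
    have "shiftA (i * snd t) a \<in> K" using step1 a by blast
    moreover have "shiftA (i * snd t) a \<in> A n p" using a shift_A by blast
    ultimately have "shiftA (snd t) (shiftA (i * snd t) a) \<in> K"
      using shift_step(1)[OF p K t] by blast
    then show "shiftA ((i + 1) * snd t) a \<in> K"
      by (simp add: shiftA_shiftA algebra_simps)
  qed
next
  case (step2 i)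
  show ?case
  proof (intro allI impI)
    fix a assume a: "a \<in> K \<and> a \<in> A n p"
    have "shiftA (i * snd t) a \<in> K" using step2 a by blast
    moreover have "shiftA (i * snd t) a \<in> A n p" using a shift_A by blast
    ultimately have "shiftA (- snd t) (shiftA (i * snd t) a) \<in> K"
      using shift_step(2)[OF p K t] by blast
    then show "shiftA ((i - 1) * snd t) a \<in> K"
      by (simp add: shiftA_shiftA algebra_simps)
  qed
qed

lemma A_pair: "w \<in> A n p \<Longrightarrow> (fst w, snd w) \<in> lamp_carrier n p"
  unfolding A_def prod.collapse by blast

lemma window_exists:
  assumes k: "k > 0" and w: "w \<in> A n p"
  shows "\<exists>q N. insupp w (q * k) (q * k + int N)"
proof -
  define Z where "Z = {z. fst w z \<noteq> (\<lambda>_. 0)}"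
  have wc: "(fst w, snd w) \<in> lamp_carrier n p" using w by (rule A_pair)
  have fZ: "finite Z" using carrierD(4)[OF wc] by (simp add: Z_def)
  have inZ: "\<And>z i. fst w z i \<noteq> 0 \<Longrightarrow> z \<in> Z" unfolding Z_def by auto
  show ?thesis
  proof (cases "Z = {}")
    case True
    then have "insupp w (0 * k) (0 * k + int 0)" unfolding insupp_def using inZ by blast
    then show ?thesis by blast
  next
    case False
    define lo where "lo = Min Z"
    define hi where "hi = Max Z"
    define q where "q = lo div k"
    have qk: "q * k \<le> lo" unfolding q_def using k
      by (metis minus_div_mult_eq_mod pos_mod_sign diff_ge_0_iff_ge)
    have lohi: "lo \<le> hi" unfolding lo_def hi_def using False fZ by simp
    have "insupp w (q * k) (q * k + int (nat (hi + 1 - q * k)))"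
      unfolding insupp_def
    proof (intro allI impI)
      fix z i assume "fst w z i \<noteq> 0"
      then have z: "z \<in> Z" by (rule inZ)
      have "lo \<le> z" unfolding lo_def using z fZ by simp
      moreover have "z \<le> hi" unfolding hi_def using z fZ by simp
      ultimately show "q * k \<le> z \<and> z < q * k + int (nat (hi + 1 - q * k))"
        using qk by linarith
    qed
    then show ?thesis by blast
  qed
qed

lemma fg_core:
  assumes p: "p > 0" and V: "subgroup V (L n p)" and t: "t \<in> V" and k: "snd t > 0"
  shows "\<exists>S. finite S \<and> S \<subseteq> V \<and> (\<forall>K. subgroup K (L n p) \<longrightarrow> S \<subseteq> K \<longrightarrow> V \<subseteq> K)"
proof -
  define k where "k = snd t"
  have k0: "k > 0" using k by (simp add: k_def)
  define M where "M = V \<inter> A n p"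
  define restr :: "lelem \<Rightarrow> int \<Rightarrow> nat \<Rightarrow> int" where
    "restr w = (\<lambda>z i. if 0 \<le> z \<and> z < k then fst w z i else 0)" for w
  define U where "U D = restr ` {w \<in> M. insupp w 0 (int D)}" for D :: nat
  define F where "F = {f :: int \<Rightarrow> nat \<Rightarrow> int. (\<forall>z i. 0 \<le> f z i \<and> f z i < int p)
     \<and> (\<forall>z i. z \<notin> {0..<k} \<or> n \<le> i \<longrightarrow> f z i = 0)}"
  have fF: "finite F" unfolding F_def by (rule finite_funs) simp
  have UF: "(\<Union>D. U D) \<subseteq> F"
  proof
    fix e assume "e \<in> (\<Union>D. U D)"
    then obtain D w where w: "w \<in> M" and e: "e = restr w" unfolding U_def by blast
    have wc: "(fst w, snd w) \<in> lamp_carrier n p" using w unfolding M_def by (blast intro: A_pair)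
    note cw = carrierD[OF wc]
    show "e \<in> F" unfolding F_def e restr_def using cw(1,2,3) p by auto
  qed
  define X where "X = (\<Union>D. U D)"
  have fX: "finite X" using UF fF finite_subset unfolding X_def by blast
  have "\<forall>e\<in>X. \<exists>D. e \<in> U D" unfolding X_def by blast
  then obtain Df where Df: "\<And>e. e \<in> X \<Longrightarrow> e \<in> U (Df e)" by metis
  define D0 where "D0 = max (nat k) (Max (Df ` X))"
  have mono: "U D \<subseteq> U D'" if "D \<le> D'" for D D'
    unfolding U_def insupp_def using that by (intro image_mono) force
  have UD0: "U D \<subseteq> U D0" for D
  proof
    fix e assume e: "e \<in> U D"
    then have eX: "e \<in> X" unfolding X_def by blast
    have "Df e \<le> D0" unfolding D0_def using fX eX by (simp add: max.coboundedI2)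
    then show "e \<in> U D0" using mono Df[OF eX] by blast
  qed
  have kD0: "k \<le> int D0" unfolding D0_def by simp
  define S0 where "S0 = {w \<in> M. insupp w 0 (int D0)}"
  have fS0: "finite S0"
    by (rule finite_subset[OF _ finite_window[of n p 0 "int D0"]]) (auto simp: S0_def M_def)
  define I where "I = {r. 0 \<le> r \<and> r < k \<and> (\<exists>s\<in>V. snd s = r)}"
  define sel where "sel r = (SOME s. s \<in> V \<and> snd s = r)" for r
  define S1 where "S1 = sel ` I"
  have fS1: "finite S1" unfolding S1_def I_def
    by (rule finite_imageI, rule finite_subset[of _ "{0..<k}"]) auto
  have sel: "sel r \<in> V \<and> snd (sel r) = r" if "r \<in> I" for r
    using that unfolding I_def sel_def by (metis (mono_tags, lifting) mem_Collect_eq someI_ex)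
  define S where "S = insert t (S0 \<union> S1)"
  have "finite S" unfolding S_def using fS0 fS1 by simp
  moreover have "S \<subseteq> V" unfolding S_def S0_def S1_def M_def using t sel by auto
  moreover have "V \<subseteq> K" if K: "subgroup K (L n p)" and SK: "S \<subseteq> K" for K
  proof -
    interpret G: group "L n p" by (rule L_group[OF p])
    have tK: "t \<in> K" and S0K: "S0 \<subseteq> K" and S1K: "S1 \<subseteq> K" using SK unfolding S_def by auto
    have Vc: "V \<subseteq> lamp_carrier n p" using subgroup.subset[OF V] by simp
    have Kc: "K \<subseteq> lamp_carrier n p" using subgroup.subset[OF K] by simp
    have Q: "\<forall>q w. w \<in> M \<and> insupp w (q * k) (q * k + int N) \<longrightarrow> w \<in> K" for N :: nat
    proof (induct N rule: less_induct)
      case (less N)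
      show ?case
      proof (intro allI impI)
        fix q w assume w: "w \<in> M \<and> insupp w (q * k) (q * k + int N)"
        define w' where "w' = shiftA ((- q) * snd t) w"
        have wV: "w \<in> V" and wA: "w \<in> A n p" using w unfolding M_def by auto
        have w'A: "w' \<in> A n p" unfolding w'_def using wA by (rule shift_A)
        have w'V: "w' \<in> V" unfolding w'_def using shift_closed[OF p V t] wV wA by blast
        have w'M: "w' \<in> M" using w'A w'V unfolding M_def by blast
        have w's: "insupp w' 0 (int N)" unfolding insupp_def
        proof (intro allI impI)
          fix z i assume "fst w' z i \<noteq> 0"
          then have "fst w (z + q * k) i \<noteq> 0" unfolding w'_def shiftA_def k_def by simp
          then have "q * k \<le> z + q * k \<and> z + q * k < q * k + int N"
            using w unfolding insupp_def by blast
          then show "0 \<le> z \<and> z < int N" by simp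
        qed
        have w'K: "w' \<in> K"
        proof (cases "N \<le> D0")
          case True
          then have "insupp w' 0 (int D0)" using w's unfolding insupp_def by force
          then have "w' \<in> S0" unfolding S0_def using w'M by blast
          then show ?thesis using S0K by blast
        next
          case False
          have "restr w' \<in> U N" unfolding U_def using w'M w's by blast
          then have "restr w' \<in> U D0" using UD0 by blast
          then obtain u where uM: "u \<in> M" and us: "insupp u 0 (int D0)" and ur: "restr w' = restr u"
            unfolding U_def by auto
          have uK: "u \<in> K" using uM us S0K unfolding S0_def by blast
          have uV: "u \<in> V" and uA: "u \<in> A n p" using uM unfolding M_def by auto
          have uc: "u \<in> carrier (L n p)" and w'c: "w' \<in> carrier (L n p)"
            using uV w'V Vc by auto
          define w'' where "w'' = w' \<otimes>\<^bsub>L n p\<^esub> inv\<^bsub>L n p\<^esub> u"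
          have w''V: "w'' \<in> V" unfolding w''_def using V uV w'V
            by (intro subgroup.m_closed subgroup.m_inv_closed) auto
          have snd0: "snd w' = 0" "snd u = 0" using w'A uA by (auto simp: A_def)
          have w''fst: "fst w'' z i = (fst w' z i + (- fst u z i) mod int p) mod int p" for z i
            unfolding w''_def using A_inv[OF p uA] snd0 by (simp add: lamp_mult_def)
          have w''A: "w'' \<in> A n p"
          proof -
            have "w'' \<in> lamp_carrier n p" using w''V Vc by auto
            moreover have "snd w'' = 0" unfolding w''_def using A_inv[OF p uA] snd0 by simp
            ultimately show ?thesis by (simp add: A_def)
          qed
          have kN: "nat k \<le> D0" unfolding D0_def by simp
          have w''s: "insupp w'' (1 * k) (1 * k + int (N - nat k))" unfolding insupp_def
          proof (intro allI impI)
            fix z i assume nz: "fst w'' z i \<noteq> 0"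
            show "1 * k \<le> z \<and> z < 1 * k + int (N - nat k)"
            proof (rule ccontr)
              assume "\<not> (1 * k \<le> z \<and> z < 1 * k + int (N - nat k))"
              then have "z < 0 \<or> (0 \<le> z \<and> z < k) \<or> int N \<le> z" using False kN k0 by linarith
              then show False
              proof (elim disjE)
                assume z: "0 \<le> z \<and> z < k"
                have "fst u z i = fst w' z i" using fun_cong[OF fun_cong[OF ur, of z], of i] z
                  unfolding restr_def by simp
                then show False using nz unfolding w''fst by (simp add: mod_add_right_eq)
              next
                assume z: "z < 0"
                have "fst w' z i = 0" using w's z unfolding insupp_def by force
                moreover have "fst u z i = 0" using us z unfolding insupp_def by force
                ultimately show False using nz unfolding w''fst by simp
              next
                assume z: "int N \<le> z"
                have "fst w' z i = 0" using w's z unfolding insupp_def by force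
                moreover have "fst u z i = 0" using us z False unfolding insupp_def by force
                ultimately show False using nz unfolding w''fst by simp
              qed
            qed
          qed
          have "N - nat k < N" using False kN k0 by linarith
          then have w''K: "w'' \<in> K" using less w''s w''A w''V unfolding M_def by blast
          have "w' = w'' \<otimes>\<^bsub>L n p\<^esub> u"
            using G.inv_solve_right[of w'' w' u] uc w'c w''_def w''V Vc by auto
          then show ?thesis using subgroup.m_closed[OF K w''K uK] by simp
        qed
        have "shiftA (q * snd t) w' \<in> K" using shift_closed[OF p K tK] w'K w'A by blast
        moreover have "shiftA (q * snd t) w' = w"
          unfolding w'_def shiftA_shiftA using shiftA_0[OF wA] by simp
        ultimately show "w \<in> K" by simp
      qed
    qed
    have MK: "w \<in> K" if wM: "w \<in> M" for w
    proof -
      have "w \<in> A n p" using wM unfolding M_def by blast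
      then obtain q N where "insupp w (q * k) (q * k + int N)" using window_exists[OF k0] by blast
      then show ?thesis using Q wM by blast
    qed
    have Y: "\<exists>y. y \<in> V \<and> y \<in> K \<and> snd y = q * k" for q :: int
    proof (induct q rule: int_induct[where k=0])
      case base
      show ?case using subgroup.one_closed[OF V] subgroup.one_closed[OF K] by auto
    next
      case (step1 i)
      then obtain y where y: "y \<in> V" "y \<in> K" "snd y = i * k" by blast
      have "y \<otimes>\<^bsub>L n p\<^esub> t \<in> V" using subgroup.m_closed[OF V y(1) t] .
      moreover have "y \<otimes>\<^bsub>L n p\<^esub> t \<in> K" using subgroup.m_closed[OF K y(2) tK] .
      moreover have "snd (y \<otimes>\<^bsub>L n p\<^esub> t) = (i + 1) * k" using y k_def by (simp add: algebra_simps)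
      ultimately show ?case by blast
    next
      case (step2 i)
      then obtain y where y: "y \<in> V" "y \<in> K" "snd y = i * k" by blast
      have tc: "t \<in> lamp_carrier n p" using t Vc by auto
      have "y \<otimes>\<^bsub>L n p\<^esub> inv\<^bsub>L n p\<^esub> t \<in> V" using y t V
        by (intro subgroup.m_closed subgroup.m_inv_closed) auto
      moreover have "y \<otimes>\<^bsub>L n p\<^esub> inv\<^bsub>L n p\<^esub> t \<in> K" using y tK K
        by (intro subgroup.m_closed subgroup.m_inv_closed) auto
      moreover have "snd (y \<otimes>\<^bsub>L n p\<^esub> inv\<^bsub>L n p\<^esub> t) = (i - 1) * k"
        using y k_def snd_inv[OF p tc] by (simp add: algebra_simps)
      ultimately show ?case by blast
    qed
    show "V \<subseteq> K"
    proof
      fix h assume h: "h \<in> V"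
      define q where "q = snd h div k"
      define r where "r = snd h mod k"
      obtain y where y: "y \<in> V" "y \<in> K" "snd y = q * k" using Y by blast
      have hc: "h \<in> carrier (L n p)" and yc: "y \<in> carrier (L n p)" using h y Vc by auto
      define x where "x = h \<otimes>\<^bsub>L n p\<^esub> inv\<^bsub>L n p\<^esub> y"
      have xV: "x \<in> V" unfolding x_def using h y V
        by (intro subgroup.m_closed subgroup.m_inv_closed) auto
      have xs: "snd x = r" unfolding x_def using snd_inv[OF p] yc y(3)
        by (simp add: q_def r_def minus_div_mult_eq_mod)
      have rI: "r \<in> I" unfolding I_def using xV xs k0 by (auto simp: r_def)
      define s where "s = sel r"
      have sV: "s \<in> V" and ss: "snd s = r" using sel[OF rI] s_def by auto
      have sK: "s \<in> K" using S1K rI unfolding S1_def s_def by blast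
      have sc: "s \<in> carrier (L n p)" and xc: "x \<in> carrier (L n p)" using sV xV Vc by auto
      define a where "a = x \<otimes>\<^bsub>L n p\<^esub> inv\<^bsub>L n p\<^esub> s"
      have aV: "a \<in> V" unfolding a_def using xV sV V
        by (intro subgroup.m_closed subgroup.m_inv_closed) auto
      have "snd a = 0" unfolding a_def using snd_inv[OF p] sc xs ss by simp
      then have aM: "a \<in> M" using aV Vc unfolding M_def A_def by auto
      have aK: "a \<in> K" by (rule MK[OF aM])
      have "x = a \<otimes>\<^bsub>L n p\<^esub> s" using G.inv_solve_right[of a x s] sc xc a_def aV Vc by auto
      moreover have "h = x \<otimes>\<^bsub>L n p\<^esub> y" using G.inv_solve_right[of x h y] hc yc x_def xV Vc by auto
      ultimately have "h = a \<otimes>\<^bsub>L n p\<^esub> s \<otimes>\<^bsub>L n p\<^esub> y" by simp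
      then show "h \<in> K" using subgroup.m_closed[OF K subgroup.m_closed[OF K aK sK] y(2)] by simp
    qed
  qed
  ultimately show ?thesis by blast
qed

theorem lemma6p13:
  fixes n p :: nat and Vs :: "nat \<Rightarrow> lelem set" and V :: "lelem set"
  assumes "prime p" and "n \<ge> 1"
    and "\<forall>m. Vs m \<in> Zset n p" and "V \<in> Zset n p"
    and "sub_converges (L n p) Vs V"
  shows "\<exists>m0. \<forall>m\<ge>m0. V \<subseteq> Vs m"
proof -
  have p: "p > 0" using assms(1) prime_gt_0_nat by blast
  interpret G: group "L n p" by (rule L_group[OF p])
  have V: "subgroup V (L n p)" and VA: "\<not> V \<subseteq> A n p"
    using assms(4) unfolding Zset_def Sub_def by auto
  have Vc: "V \<subseteq> lamp_carrier n p" using subgroup.subset[OF V] by simp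
  obtain t0 where t0: "t0 \<in> V" "t0 \<notin> A n p" using VA by blast
  have t0c: "t0 \<in> lamp_carrier n p" using t0 Vc by auto
  have "snd t0 \<noteq> 0" using t0 t0c unfolding A_def by auto
  then obtain t where t: "t \<in> V" "snd t > 0"
  proof (cases "snd t0 > 0")
    case True then show ?thesis by (rule that[OF t0(1)])
  next
    case False
    then have "snd (inv\<^bsub>L n p\<^esub> t0) > 0" using snd_inv[OF p t0c] \<open>snd t0 \<noteq> 0\<close> by simp
    moreover have "inv\<^bsub>L n p\<^esub> t0 \<in> V" using subgroup.m_inv_closed[OF V t0(1)] .
    ultimately show ?thesis by (rule that[rotated])
  qed
  obtain S where S: "finite S" "S \<subseteq> V" "\<forall>K. subgroup K (L n p) \<longrightarrow> S \<subseteq> K \<longrightarrow> V \<subseteq> K"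
    using fg_core[OF p V t] by blast
  have "\<forall>g\<in>S. eventually (\<lambda>m. g \<in> Vs m) sequentially"
  proof
    fix g assume g: "g \<in> S"
    then have "g \<in> carrier (L n p)" "g \<in> V" using S(2) Vc by auto
    then have "eventually (\<lambda>m. (g \<in> Vs m) = (g \<in> V)) sequentially"
      using assms(5) unfolding sub_converges_def by blast
    then show "eventually (\<lambda>m. g \<in> Vs m) sequentially"
      using \<open>g \<in> V\<close> by (auto elim: eventually_mono)
  qed
  then have "eventually (\<lambda>m. \<forall>g\<in>S. g \<in> Vs m) sequentially"
    by (rule eventually_ball_finite[OF S(1)])
  then obtain m0 where m0: "\<And>m. m \<ge> m0 \<Longrightarrow> \<forall>g\<in>S. g \<in> Vs m"
    unfolding eventually_sequentially by auto
  have "V \<subseteq> Vs m" if "m \<ge> m0" for m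
  proof -
    have "subgroup (Vs m) (L n p)" using assms(3) unfolding Zset_def Sub_def by auto
    moreover have "S \<subseteq> Vs m" using m0[OF that] by blast
    ultimately show ?thesis using S(3) by blast
  qed
  then show ?thesis by blast
qed

end
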